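(* Let $w$ be a positive integer and let $x$ be an integer with $0\le x\le p-1$ and $x\notin\{1,p-1\}$. If $T_n(x)\equiv x\pmod{p^w}$, then $T'_n(x)\equiv n\pmod{p^w}$ or $T'_n(x)\equiv -n\pmod{p^w}$.
   Context: $p$ is a prime with $p>3$ and $n>1$ is an integer with $\gcd(n,p)=\gcd(n,p^2-1)=1$. $T_n(x)\in\mathbb{Z}[x]$ is the Chebyshev polynomial of the first kind: $T_0=1$, $T_1=x$, $T_d=2xT_{d-1}-T_{d-2}$; $T'_n$ is its derivative. *)

theory Defs
  imports "HOL-Computational_Algebra.Polynomial" "HOL-Number_Theory.Number_Theory"
begin

fun chebT :: "nat \<Rightarrow> int poly" where
  "chebT 0 = 1"
| "chebT (Suc 0) = [:0, 1:]"
| "chebT (Suc (Suc d)) = [:0, 2:] * chebT (Suc d) - chebT d"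

end

theory Submission
  imports Defs
begin

definition XX :: "int poly" where "XX = [:0,1:]"

lemma XX2: "[:0,2:] = 2 * XX" by (simp add: XX_def numeral_poly)
lemma dXX: "pderiv XX = 1" by (simp add: XX_def pderiv_pCons)
lemma polyXX: "poly XX x = x" by (simp add: XX_def)
lemma dXXQ: "pderiv (XX*XX - 1) = 2*XX" by (simp add: pderiv_mult pderiv_diff dXX)

fun pr :: "nat \<Rightarrow> int poly \<times> int poly" where
  "pr 0 = (1, 0)"
| "pr (Suc n) = (XX * fst (pr n) + (XX*XX - 1) * snd (pr n), fst (pr n) + XX * snd (pr n))"

lemma pr_rec: "fst (pr (Suc (Suc n))) = (2*XX) * fst (pr (Suc n)) - fst (pr n)"
proof -
  define T where "T = fst (pr n)"
  define U where "U = snd (pr n)"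
  have "fst (pr (Suc (Suc n))) = XX * (XX * T + (XX*XX - 1) * U) + (XX*XX - 1) * (T + XX * U)"
    by (simp add: T_def U_def)
  also have "\<dots> = (2*XX) * (XX * T + (XX*XX - 1) * U) - T"
    by (simp add: algebra_simps)
  finally show ?thesis by (simp add: T_def U_def)
qed

lemma pr_T: "fst (pr n) = chebT n"
  by (induction n rule: chebT.induct) (simp_all add: pr_rec XX2 del: pr.simps, simp_all add: XX_def)

lemma pr_pell: "fst (pr n) ^ 2 - (XX*XX - 1) * snd (pr n) ^ 2 = 1"
proof (induction n)
  case 0 then show ?case by simp
next
  case (Suc n)
  define T where "T = fst (pr n)"
  define U where "U = snd (pr n)"
  have "fst (pr (Suc n)) ^ 2 - (XX*XX - 1) * snd (pr (Suc n)) ^ 2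
     = (XX * T + (XX*XX - 1) * U)^2 - (XX*XX - 1) * (T + XX * U)^2"
    by (simp add: T_def U_def)
  also have "\<dots> = T^2 - (XX*XX - 1) * U^2"
    by (simp add: algebra_simps power2_eq_square)
  finally show ?case using Suc by (simp add: T_def U_def)
qed

lemma pr_deriv: "pderiv (fst (pr n)) = of_nat n * snd (pr n) \<and>
   (XX*XX - 1) * pderiv (snd (pr n)) = of_nat n * fst (pr n) - XX * snd (pr n)"
proof (induction n)
  case 0 then show ?case by simp
next
  case (Suc n)
  define T where "T = fst (pr n)"
  define U where "U = snd (pr n)"
  have h1: "pderiv T = of_nat n * U" and h2: "(XX*XX - 1) * pderiv U = of_nat n * T - XX * U"
    using Suc by (simp_all add: T_def U_def)
  have "pderiv (fst (pr (Suc n))) = pderiv (XX * T + (XX*XX - 1) * U)"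
    by (simp add: T_def U_def)
  also have "\<dots> = T + XX * pderiv T + (2*XX) * U + (XX*XX - 1) * pderiv U"
    by (simp only: pderiv_add pderiv_mult dXX dXXQ) (simp add: algebra_simps)
  also have "\<dots> = T + XX * (of_nat n * U) + (2*XX) * U + (of_nat n * T - XX * U)"
    by (simp add: h1 h2)
  also have "\<dots> = of_nat (Suc n) * (T + XX * U)"
    by (simp add: algebra_simps)
  finally have A: "pderiv (fst (pr (Suc n))) = of_nat (Suc n) * snd (pr (Suc n))"
    by (simp add: T_def U_def)
  have "(XX*XX - 1) * pderiv (snd (pr (Suc n))) = (XX*XX - 1) * pderiv (T + XX * U)"
    by (simp add: T_def U_def)
  also have "\<dots> = (XX*XX - 1) * pderiv T + (XX*XX - 1) * U + XX * ((XX*XX - 1) * pderiv U)"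
    by (simp only: pderiv_add pderiv_mult dXX) (simp add: algebra_simps)
  also have "\<dots> = (XX*XX - 1) * (of_nat n * U) + (XX*XX - 1) * U + XX * (of_nat n * T - XX * U)"
    by (simp add: h1 h2)
  also have "\<dots> = of_nat (Suc n) * (XX * T + (XX*XX - 1) * U) - XX * (T + XX * U)"
    by (simp add: algebra_simps)
  finally have B: "(XX*XX - 1) * pderiv (snd (pr (Suc n))) = of_nat (Suc n) * fst (pr (Suc n)) - XX * snd (pr (Suc n))"
    by (simp add: T_def U_def)
  show ?case using A B by blast
qed

theorem lemma4:
  fixes p n w :: nat and x :: int
  assumes "prime p" and "p > 3" and "n > 1"
    and "gcd n p = 1" and "gcd n (p^2 - 1) = 1"
    and "w > 0"
    and "0 \<le> x" and "x \<le> int p - 1" and "x \<notin> {1, int p - 1}"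
    and "[poly (chebT n) x = x] (mod (int p ^ w))"
  shows "[poly (pderiv (chebT n)) x = int n] (mod (int p ^ w)) \<or>
         [poly (pderiv (chebT n)) x = - int n] (mod (int p ^ w))"
proof -
  define t where "t = poly (chebT n) x"
  define u where "u = poly (snd (pr n)) x"
  define d where "d = poly (pderiv (chebT n)) x"
  define P where "P = int p ^ w"
  have pp: "prime (int p)" using assms(1) by simp
  have dd: "d = int n * u"
    using pr_deriv[of n] by (simp add: d_def u_def pr_T[symmetric])
  have pell: "t^2 - (x*x - 1) * u^2 = 1"
    using arg_cong[OF pr_pell[of n], of "\<lambda>q. poly q x"] by (simp add: t_def u_def pr_T polyXX algebra_simps)
  have key: "(x - 1) * (x + 1) * ((d - int n) * (d + int n)) = int n ^ 2 * ((t - x) * (t + x))"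
  proof -
    have "(x*x - 1) * u^2 = t^2 - 1" using pell by simp
    moreover have "(x*x-1) * d^2 = int n^2 * ((x*x - 1) * u^2)" by (simp add: dd power_mult_distrib algebra_simps)
    ultimately have "(x*x-1) * d^2 = int n^2 * (t^2 - 1)" by simp
    then show ?thesis by (simp add: algebra_simps power2_eq_square)
  qed
  have "P dvd t - x" using assms(10) by (simp add: cong_iff_dvd_diff t_def P_def)
  then have "P dvd (x - 1) * (x + 1) * ((d - int n) * (d + int n))" unfolding key by simp
  have ndv: "\<not> int p dvd y" if "y \<noteq> 0" "-1 \<le> y" "y \<le> int p - 1" for y
  proof
    assume "int p dvd y"
    then obtain k where k: "y = int p * k" by auto
    have "k \<le> -1 \<or> k = 0 \<or> k \<ge> 1" by linarith
    moreover have "k \<le> -1 \<Longrightarrow> int p * k \<le> int p * (-1)" by (rule mult_left_mono) auto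
    moreover have "k \<ge> 1 \<Longrightarrow> int p * k \<ge> int p * 1" by (rule mult_left_mono) auto
    ultimately show False using that k assms(2) by auto
  qed
  have c1: "\<not> int p dvd (x - 1)" using assms(7,8,9) by (intro ndv) auto
  have c2: "\<not> int p dvd (x + 1)" using assms(7,8,9) by (intro ndv) auto
  have "coprime P ((x - 1) * (x + 1))"
    unfolding P_def using pp c1 c2 by (simp add: prime_imp_coprime prime_dvd_mult_iff)
  with \<open>P dvd (x - 1) * (x + 1) * ((d - int n) * (d + int n))\<close>
  have main: "P dvd (d - int n) * (d + int n)" using coprime_dvd_mult_right_iff by blast
  have pn: "\<not> int p dvd int n"
  proof
    assume "int p dvd int n"
    then have "p dvd n" by simp
    then have "p dvd gcd n p" by simp
    then show False using assms(4) assms(2) by simp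
  qed
  have "\<not> (int p dvd (d - int n) \<and> int p dvd (d + int n))"
  proof
    assume "int p dvd (d - int n) \<and> int p dvd (d + int n)"
    then have "int p dvd (d + int n) - (d - int n)" using dvd_diff by blast
    then have "int p dvd 2 * int n" by (simp add: algebra_simps mult_2)
    then have "int p dvd 2 \<or> int p dvd int n" using pp prime_dvd_mult_iff by blast
    moreover have "\<not> int p dvd 2" using assms(2) by (auto dest: zdvd_imp_le)
    ultimately show False using pn by blast
  qed
  then have "coprime P (d - int n) \<or> coprime P (d + int n)"
    unfolding P_def using pp by (auto simp: prime_imp_coprime)
  then have "P dvd d + int n \<or> P dvd d - int n"
    using main coprime_dvd_mult_right_iff coprime_dvd_mult_left_iff by blast
  then show ?thesis
    by (auto simp: cong_iff_dvd_diff d_def P_def)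
qed

end
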